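(* For every $d\in\mathbf{N}I$, the characteristic function $\chi_d$ of $R_d$ belongs to the composition algebra $\mathcal{C}$.
   Context: $Q$ is a finite quiver without oriented cycles with vertex set $I$, $r_{ij}$ arrows $i\to j$, Euler form $\langle i,j\rangle=\delta_{ij}-r_{ij}$. $\mathbf{k}$ is a finite field with $v^2$ elements. $\mathcal{H}=\bigoplus_{d\in\mathbf NI}\mathcal{H}_d$ is the Hall algebra: $\mathcal{H}_d$ is the space of $G_d$-invariant functions $R_d\to\mathbf{C}$ on the set $R_d$ of representations of dimension type $d$ (invariant under $G_d=\prod_i\mathrm{GL}_{d_i}(\mathbf k)$), with product $(f*g)(X)=v^{\langle e,d\rangle}\sum_{U\subseteq X}f(U)g(X/U)$ for $f\in\mathcal{H}_d,g\in\mathcal{H}_e$ (sum over subrepresentations; $f(U)=0$ if $\underline{\dim}U\ne d$). $\chi_d\in\mathcal H_d$ is the constant function $1$ on $R_d$. $\mathcal{C}$ is the $\mathbf{C}$-subalgebra of $\mathcal{H}$ generated by the $\chi_i$, $i\in I$ (here $i$ is viewed as the dimension type with $1$ at $i$ and $0$ elsewhere). *)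

theory Defs
  imports Complex_Main
begin

text \<open>
The quiver has vertex type 'i (finite), with r i j arrows i -> j,
indexed by m < r i j.  The base field is a finite field 'k; v = sqrt |k|.
Vectors of k^n are functions nat => 'k vanishing outside {..<n};
an (m x n)-matrix is a function nat => nat => 'k vanishing outside {..<m} x {..<n}.
A representation of dimension type d assigns to the m-th arrow i -> j a
(d j x d i)-matrix.
\<close>

type_synonym 'k vect = "nat \<Rightarrow> 'k"
type_synonym 'k matr = "nat \<Rightarrow> nat \<Rightarrow> 'k"
type_synonym ('i,'k) rep = "'i \<Rightarrow> 'i \<Rightarrow> nat \<Rightarrow> 'k matr"
type_synonym ('i,'k) hall = "('i \<Rightarrow> nat) \<Rightarrow> ('i,'k) rep \<Rightarrow> complex"

definition vecs :: "nat \<Rightarrow> ('k::field) vect set" where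
  "vecs n = {x. \<forall>p\<ge>n. x p = 0}"

definition mats :: "nat \<Rightarrow> nat \<Rightarrow> ('k::field) matr set" where
  "mats m n = {A. \<forall>p q. (m \<le> p \<or> n \<le> q) \<longrightarrow> A p q = 0}"

definition mv :: "nat \<Rightarrow> ('k::field) matr \<Rightarrow> 'k vect \<Rightarrow> 'k vect" where
  "mv n A x = (\<lambda>p. \<Sum>q<n. A p q * x q)"

definition mm :: "nat \<Rightarrow> ('k::field) matr \<Rightarrow> 'k matr \<Rightarrow> 'k matr" where
  "mm n A B = (\<lambda>p s. \<Sum>q<n. A p q * B q s)"

definition idm :: "nat \<Rightarrow> ('k::field) matr" where
  "idm n = (\<lambda>p q. if p = q \<and> p < n then 1 else 0)"

definition reps :: "('i \<Rightarrow> 'i \<Rightarrow> nat) \<Rightarrow> ('i \<Rightarrow> nat) \<Rightarrow> ('i,'k::field) rep set" where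
  "reps r d = {X. \<forall>i j m. X i j m \<in> mats (d j) (d i) \<and> (r i j \<le> m \<longrightarrow> X i j m = (\<lambda>_ _. 0))}"

definition GLd :: "('i \<Rightarrow> nat) \<Rightarrow> ('i \<Rightarrow> ('k::field) matr) set" where
  "GLd d = {g. \<forall>i. g i \<in> mats (d i) (d i) \<and>
      (\<exists>h \<in> mats (d i) (d i). mm (d i) (g i) h = idm (d i) \<and> mm (d i) h (g i) = idm (d i))}"

text \<open>Y = g . X, i.e. Y_a = g_j X_a g_i^{-1} for every arrow a : i -> j.\<close>
definition acts :: "('i \<Rightarrow> 'i \<Rightarrow> nat) \<Rightarrow> ('i \<Rightarrow> nat) \<Rightarrow> ('i \<Rightarrow> ('k::field) matr)
     \<Rightarrow> ('i,'k) rep \<Rightarrow> ('i,'k) rep \<Rightarrow> bool" where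
  "acts r d g X Y \<longleftrightarrow> (\<forall>i j m. m < r i j \<longrightarrow>
      mm (d i) (Y i j m) (g i) = mm (d j) (g j) (X i j m))"

definition invariant :: "('i \<Rightarrow> 'i \<Rightarrow> nat) \<Rightarrow> ('i \<Rightarrow> nat) \<Rightarrow> (('i,'k::field) rep \<Rightarrow> complex) \<Rightarrow> bool" where
  "invariant r d f \<longleftrightarrow> (\<forall>X\<in>reps r d. \<forall>Y\<in>reps r d. \<forall>g\<in>GLd d. acts r d g X Y \<longrightarrow> f Y = f X)"

definition hall_alg :: "('i \<Rightarrow> 'i \<Rightarrow> nat) \<Rightarrow> ('i,'k::field) hall set" where
  "hall_alg r = {h. finite {d. h d \<noteq> (\<lambda>_. 0)} \<and>
      (\<forall>d. invariant r d (h d) \<and> (\<forall>X. X \<notin> reps r d \<longrightarrow> h d X = 0))}"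

definition subsp :: "nat \<Rightarrow> ('k::field) vect set \<Rightarrow> bool" where
  "subsp n U \<longleftrightarrow> U \<subseteq> vecs n \<and> (\<lambda>_. 0) \<in> U \<and> (\<forall>x\<in>U. \<forall>y\<in>U. (\<lambda>p. x p + y p) \<in> U)
      \<and> (\<forall>c. \<forall>x\<in>U. (\<lambda>p. c * x p) \<in> U)"

definition subreps :: "('i \<Rightarrow> 'i \<Rightarrow> nat) \<Rightarrow> ('i \<Rightarrow> nat) \<Rightarrow> ('i,'k::field) rep \<Rightarrow> ('i \<Rightarrow> 'k vect set) set" where
  "subreps r d X = {U. (\<forall>i. subsp (d i) (U i)) \<and>
      (\<forall>i j m x. m < r i j \<longrightarrow> x \<in> U i \<longrightarrow> mv (d i) (X i j m) x \<in> U j)}"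

definition is_sub :: "('i \<Rightarrow> 'i \<Rightarrow> nat) \<Rightarrow> ('i \<Rightarrow> nat) \<Rightarrow> ('i \<Rightarrow> nat) \<Rightarrow> ('i,'k::field) rep
     \<Rightarrow> ('i \<Rightarrow> 'k vect set) \<Rightarrow> ('i,'k) rep \<Rightarrow> bool" where
  "is_sub r d e X U Y \<longleftrightarrow> (\<exists>\<phi>. (\<forall>i. \<phi> i \<in> mats (d i) (e i)
       \<and> inj_on (mv (e i) (\<phi> i)) (vecs (e i)) \<and> mv (e i) (\<phi> i) ` vecs (e i) = U i)
     \<and> (\<forall>i j m. m < r i j \<longrightarrow> mm (e j) (\<phi> j) (Y i j m) = mm (d i) (X i j m) (\<phi> i)))"

definition is_quot :: "('i \<Rightarrow> 'i \<Rightarrow> nat) \<Rightarrow> ('i \<Rightarrow> nat) \<Rightarrow> ('i \<Rightarrow> nat) \<Rightarrow> ('i,'k::field) rep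
     \<Rightarrow> ('i \<Rightarrow> 'k vect set) \<Rightarrow> ('i,'k) rep \<Rightarrow> bool" where
  "is_quot r d e X U Y \<longleftrightarrow> (\<exists>\<psi>. (\<forall>i. \<psi> i \<in> mats (e i) (d i)
       \<and> mv (d i) (\<psi> i) ` vecs (d i) = vecs (e i)
       \<and> {x \<in> vecs (d i). mv (d i) (\<psi> i) x = (\<lambda>_. 0)} = U i)
     \<and> (\<forall>i j m. m < r i j \<longrightarrow> mm (d j) (\<psi> j) (X i j m) = mm (e i) (Y i j m) (\<psi> i)))"

text \<open>f(U) and g(X/U) for f \<in> H_e (zero if the dimension type does not match);
  well defined by G-invariance.\<close>
definition sub_val :: "('i \<Rightarrow> 'i \<Rightarrow> nat) \<Rightarrow> ('i \<Rightarrow> nat) \<Rightarrow> ('i \<Rightarrow> nat) \<Rightarrow> (('i,'k::field) rep \<Rightarrow> complex)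
     \<Rightarrow> ('i,'k) rep \<Rightarrow> ('i \<Rightarrow> 'k vect set) \<Rightarrow> complex" where
  "sub_val r d e f X U = (if \<exists>Y\<in>reps r e. is_sub r d e X U Y
      then f (SOME Y. Y \<in> reps r e \<and> is_sub r d e X U Y) else 0)"

definition quot_val :: "('i \<Rightarrow> 'i \<Rightarrow> nat) \<Rightarrow> ('i \<Rightarrow> nat) \<Rightarrow> ('i \<Rightarrow> nat) \<Rightarrow> (('i,'k::field) rep \<Rightarrow> complex)
     \<Rightarrow> ('i,'k) rep \<Rightarrow> ('i \<Rightarrow> 'k vect set) \<Rightarrow> complex" where
  "quot_val r d e f X U = (if \<exists>Y\<in>reps r e. is_quot r d e X U Y
      then f (SOME Y. Y \<in> reps r e \<and> is_quot r d e X U Y) else 0)"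

definition euler :: "('i::finite \<Rightarrow> 'i \<Rightarrow> nat) \<Rightarrow> ('i \<Rightarrow> nat) \<Rightarrow> ('i \<Rightarrow> nat) \<Rightarrow> int" where
  "euler r a b = (\<Sum>i\<in>UNIV. int (a i * b i)) - (\<Sum>i\<in>UNIV. \<Sum>j\<in>UNIV. int (r i j * a i * b j))"

definition vq :: "'k::{finite,field} itself \<Rightarrow> complex" where
  "vq _ = complex_of_real (sqrt (real (card (UNIV :: 'k set))))"

definition hall_mult :: "('i::finite \<Rightarrow> 'i \<Rightarrow> nat) \<Rightarrow> ('i,'k::{finite,field}) hall \<Rightarrow> ('i,'k) hall \<Rightarrow> ('i,'k) hall" where
  "hall_mult r f g = (\<lambda>c X. if X \<in> reps r c then
      (\<Sum>d\<in>{d. \<forall>i. d i \<le> c i}. vq TYPE('k) powi (euler r (\<lambda>i. c i - d i) d) *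
         (\<Sum>U\<in>subreps r c X. sub_val r c d (f d) X U * quot_val r c (\<lambda>i. c i - d i) (g (\<lambda>i. c i - d i)) X U))
    else 0)"

definition chi :: "('i \<Rightarrow> 'i \<Rightarrow> nat) \<Rightarrow> ('i \<Rightarrow> nat) \<Rightarrow> ('i,'k::field) hall" where
  "chi r d = (\<lambda>c X. if c = d \<and> X \<in> reps r d then 1 else 0)"

definition simple_dim :: "'i \<Rightarrow> 'i \<Rightarrow> nat" where
  "simple_dim i = (\<lambda>j. if j = i then 1 else 0)"

inductive_set comp_alg :: "('i::finite \<Rightarrow> 'i \<Rightarrow> nat) \<Rightarrow> ('i,'k::{finite,field}) hall set"
  for r where
  unit: "chi r (\<lambda>_. 0) \<in> comp_alg r"
| gen: "chi r (simple_dim i) \<in> comp_alg r"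
| add: "f \<in> comp_alg r \<Longrightarrow> g \<in> comp_alg r \<Longrightarrow> (\<lambda>c X. f c X + g c X) \<in> comp_alg r"
| smult: "f \<in> comp_alg r \<Longrightarrow> (\<lambda>c X. a * f c X) \<in> comp_alg r"
| mult: "f \<in> comp_alg r \<Longrightarrow> g \<in> comp_alg r \<Longrightarrow> hall_mult r f g \<in> comp_alg r"

end

theory Submission
  imports Defs "HOL-Library.FuncSet"
begin

lemma finite_vecs: "finite (vecs n :: ('k::{finite,field}) vect set)"
proof -
  have "vecs n \<subseteq> (\<lambda>xs p. if p < n then xs ! p else 0) ` {xs. set xs \<subseteq> (UNIV::'k set) \<and> length xs = n}"
  proof
    fix x :: "'k vect" assume "x \<in> vecs n"
    then have "x = (\<lambda>p. if p < n then map x [0..<n] ! p else 0)"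
      by (auto simp: vecs_def)
    then show "x \<in> (\<lambda>xs p. if p < n then xs ! p else 0) ` {xs. set xs \<subseteq> (UNIV::'k set) \<and> length xs = n}"
      by (intro image_eqI[where x="map x [0..<n]"]) auto
  qed
  moreover have "finite {xs. set xs \<subseteq> (UNIV::'k set) \<and> length xs = n}"
    by (rule finite_lists_length_eq) simp
  ultimately show ?thesis by (meson finite_imageI finite_subset)
qed

lemma zero_vecs[simp]: "(\<lambda>_. 0) \<in> vecs n" by (simp add: vecs_def)
lemma vecs0: "vecs 0 = {\<lambda>_. 0}" by (auto simp: vecs_def)
lemma mv_mats: "A \<in> mats m n \<Longrightarrow> mv n A x \<in> vecs m"
  by (simp add: mv_def mats_def vecs_def)
lemma mv_zero_mat[simp]: "mv n (\<lambda>_ _. 0) x = (\<lambda>_. 0)" by (simp add: mv_def)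
lemma mv_zero_vec[simp]: "mv n A (\<lambda>_. 0) = (\<lambda>_. 0)" by (simp add: mv_def)
lemma idm_sum_l: "(\<Sum>q<n. idm n p q * (f q::'k::field)) = (if p < n then f p else 0)"
proof -
  have "(\<Sum>q<n. idm n p q * f q) = (\<Sum>q<n. if q = p then (if p < n then f q else 0) else 0)"
    by (rule sum.cong) (auto simp: idm_def)
  then show ?thesis by (simp add: sum.delta')
qed
lemma idm_sum_r: "(\<Sum>q<n. (f q::'k::field) * idm n q s) = (if s < n then f s else 0)"
proof -
  have "(\<Sum>q<n. f q * idm n q s) = (\<Sum>q<n. if q = s then (if s < n then f q else 0) else 0)"
    by (rule sum.cong) (auto simp: idm_def)
  then show ?thesis by (simp add: sum.delta')
qed
lemma mv_idm: "x \<in> vecs n \<Longrightarrow> mv n (idm n) x = x"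
  by (auto simp: mv_def idm_sum_l vecs_def)
lemma mm_idm_left: "A \<in> mats m n \<Longrightarrow> mm m (idm m) A = A"
  unfolding mm_def idm_sum_l by (rule ext)+ (auto simp: mats_def)
lemma mm_idm_right: "A \<in> mats m n \<Longrightarrow> mm n A (idm n) = A"
  unfolding mm_def idm_sum_r by (rule ext)+ (auto simp: mats_def)
lemma mm_zero_left[simp]: "mm n (\<lambda>_ _. 0) B = (\<lambda>_ _. 0)" by (simp add: mm_def)
lemma mm_zero_right[simp]: "mm n A (\<lambda>_ _. 0) = (\<lambda>_ _. 0)" by (simp add: mm_def)
lemma zero_mats[simp]: "(\<lambda>_ _. 0) \<in> mats m n" by (simp add: mats_def)
lemma mats0: "A \<in> mats 0 n \<Longrightarrow> A = (\<lambda>_ _. 0)" by (auto simp: mats_def)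
lemma mats0': "A \<in> mats m 0 \<Longrightarrow> A = (\<lambda>_ _. 0)" by (auto simp: mats_def)
lemma zero_rep[simp]: "(\<lambda>_ _ _ _ _. 0) \<in> reps r e" by (simp add: reps_def)
lemma idm_mats: "k \<le> m \<Longrightarrow> idm k \<in> mats m k" by (auto simp: idm_def mats_def)

lemma finite_subreps: "finite (subreps r d X :: ('i::finite \<Rightarrow> ('k::{finite,field}) vect set) set)"
proof -
  have "subreps r d X \<subseteq> Pi\<^sub>E UNIV (\<lambda>i. Pow (vecs (d i)))"
    by (auto simp: subreps_def subsp_def PiE_UNIV_domain)
  moreover have "finite (Pi\<^sub>E (UNIV::'i set) (\<lambda>i. Pow (vecs (d i) :: 'k vect set)))"
    by (intro finite_PiE) (auto simp: finite_vecs)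
  ultimately show ?thesis by (rule finite_subset)
qed

lemma finite_dims: "finite {d. \<forall>i. d i \<le> (c::'i::finite \<Rightarrow> nat) i}"
proof -
  have "{d. \<forall>i. d i \<le> c i} \<subseteq> Pi\<^sub>E UNIV (\<lambda>i. {..c i})"
    by (auto simp: PiE_UNIV_domain)
  moreover have "finite (Pi\<^sub>E (UNIV::'i set) (\<lambda>i. {..c i}))"
    by (intro finite_PiE) auto
  ultimately show ?thesis by (rule finite_subset)
qed

lemma sub_val_chi: "sub_val r d e (chi r e e) X U = (if \<exists>Y\<in>reps r e. is_sub r d e X U Y then 1 else 0)"
proof (cases "\<exists>Y\<in>reps r e. is_sub r d e X U Y")
  case True
  then have "\<exists>Y. Y \<in> reps r e \<and> is_sub r d e X U Y" by blast
  from someI_ex[OF this] show ?thesis using True by (simp add: sub_val_def chi_def)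
qed (simp add: sub_val_def)

lemma quot_val_chi: "quot_val r d e (chi r e e) X U = (if \<exists>Y\<in>reps r e. is_quot r d e X U Y then 1 else 0)"
proof (cases "\<exists>Y\<in>reps r e. is_quot r d e X U Y")
  case True
  then have "\<exists>Y. Y \<in> reps r e \<and> is_quot r d e X U Y" by blast
  from someI_ex[OF this] show ?thesis using True by (simp add: quot_val_def chi_def)
qed (simp add: quot_val_def)

lemma chi_other: "d' \<noteq> e \<Longrightarrow> chi r e d' = (\<lambda>_. 0)" by (simp add: chi_def)

lemma hm_chi:
  fixes e1 e2 c :: "'i::finite \<Rightarrow> nat" and X :: "('i,'k::{finite,field}) rep"
  assumes X: "X \<in> reps r c"
  shows "hall_mult r (chi r e1) (chi r e2) c X = (if c = (\<lambda>i. e1 i + e2 i) then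
     vq TYPE('k) powi euler r e2 e1 * (\<Sum>U\<in>subreps r c X.
       (if \<exists>Y\<in>reps r e1. is_sub r c e1 X U Y then 1 else 0) *
       (if \<exists>Y\<in>reps r e2. is_quot r c e2 X U Y then 1 else 0)) else 0)"
proof -
  define T where "T = (\<lambda>d. vq TYPE('k) powi (euler r (\<lambda>i. c i - d i) d) *
         (\<Sum>U\<in>subreps r c X. sub_val r c d (chi r e1 d) X U * quot_val r c (\<lambda>i. c i - d i) (chi r e2 (\<lambda>i. c i - d i)) X U))"
  have hm: "hall_mult r (chi r e1) (chi r e2) c X = (\<Sum>d\<in>{d. \<forall>i. d i \<le> c i}. T d)"
    using X by (simp add: hall_mult_def T_def)
  have T0: "T d = 0" if "d \<noteq> e1" for d
  proof -
    have "(chi r e1 d :: ('i,'k) rep \<Rightarrow> complex) = (\<lambda>_. 0)" using that by (rule chi_other)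
    then have "sub_val r c d (chi r e1 d) X U = 0" for U by (simp add: sub_val_def)
    then show ?thesis by (simp add: T_def)
  qed
  show ?thesis
  proof (cases "c = (\<lambda>i. e1 i + e2 i)")
    case True
    have ce: "(\<lambda>i. c i - e1 i) = e2" using True by auto
    have "(\<Sum>d\<in>{d. \<forall>i. d i \<le> c i}. T d) = (\<Sum>d\<in>{d. \<forall>i. d i \<le> c i}. if d = e1 then T e1 else 0)"
      by (rule sum.cong) (auto simp: T0)
    also have "\<dots> = T e1" using True by (simp add: sum.delta' finite_dims)
    finally show ?thesis using True hm ce
      by (simp add: T_def sub_val_chi quot_val_chi)
  next
    case False
    have "T d = 0" if "d \<in> {d. \<forall>i. d i \<le> c i}" for d
    proof (cases "d = e1")
      case True
      have "(\<lambda>i. c i - d i) \<noteq> e2"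
      proof
        assume "(\<lambda>i. c i - d i) = e2"
        then have "c = (\<lambda>i. e1 i + e2 i)" using that True by (auto simp: fun_eq_iff)
          (metis le_add_diff_inverse)
        with False show False by simp
      qed
      then have "(chi r e2 (\<lambda>i. c i - d i) :: ('i,'k) rep \<Rightarrow> complex) = (\<lambda>_. 0)" by (rule chi_other)
      then have "quot_val r c (\<lambda>i. c i - d i) (chi r e2 (\<lambda>i. c i - d i)) X U = 0" for U by (simp add: quot_val_def)
      then show ?thesis by (simp add: T_def)
    qed (simp add: T0)
    then show ?thesis using hm False by simp
  qed
qed

lemma vq_nz: "vq TYPE('k::{finite,field}) \<noteq> 0"
proof -
  have "card (UNIV::'k set) > 0" by (simp add: finite_UNIV_card_ge_0)
  then show ?thesis by (simp add: vq_def)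
qed

lemma step:
  fixes e1 e2 d :: "'i::finite \<Rightarrow> nat"
  assumes H: "\<And>c X. hall_mult r (chi r e1 :: ('i,'k::{finite,field}) hall) (chi r e2) c X = (if c = d \<and> X \<in> reps r d then K else 0)"
    and K: "K \<noteq> 0"
    and c1: "(chi r e1 :: ('i,'k::{finite,field}) hall) \<in> comp_alg r" and c2: "(chi r e2 :: ('i,'k) hall) \<in> comp_alg r"
  shows "(chi r d :: ('i,'k) hall) \<in> comp_alg r"
proof -
  have "(\<lambda>c X. (1/K) * hall_mult r (chi r e1 :: ('i,'k) hall) (chi r e2) c X) \<in> comp_alg r"
    by (intro comp_alg.smult comp_alg.mult c1 c2)
  moreover have "(\<lambda>c X. (1/K) * hall_mult r (chi r e1 :: ('i,'k) hall) (chi r e2) c X) = (chi r d :: ('i,'k) hall)"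
    apply (rule ext)+ apply (subst H) using K by (auto simp: chi_def)
  ultimately show ?thesis by simp
qed

lemma inj_full:
  assumes A: "A \<in> mats n n" and inj: "inj_on (mv n A) (vecs n :: ('k::{finite,field}) vect set)"
  shows "mv n A ` vecs n = vecs n"
proof (rule card_subset_eq)
  show "finite (vecs n :: 'k vect set)" by (rule finite_vecs)
  show "mv n A ` vecs n \<subseteq> vecs n" using mv_mats[OF A] by blast
  show "card (mv n A ` vecs n) = card (vecs n :: 'k vect set)" using card_image[OF inj] .
qed

lemma zero_img: "(\<lambda>_. 0) \<in> (\<lambda>x (_::nat). 0::'k::field) ` vecs n"
  by (rule image_eqI[where x="\<lambda>_. 0"]) auto

lemma mv0: "mv 0 A x = (\<lambda>_. 0)" by (simp add: mv_def)

lemma inj_idm: "inj_on (mv n (idm n)) (vecs n)"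
  by (rule inj_onI) (simp add: mv_idm)
lemma img_idm: "mv n (idm n) ` vecs n = vecs n"
proof -
  have "mv n (idm n) ` vecs n = id ` vecs n" by (rule image_cong) (auto simp: mv_idm)
  then show ?thesis by simp
qed

lemma reps_mats: "X \<in> reps r d \<Longrightarrow> X i j m \<in> mats (d j) (d i)"
  by (simp add: reps_def)
lemma reps_out: "X \<in> reps r d \<Longrightarrow> r i j \<le> m \<Longrightarrow> X i j m = (\<lambda>_ _. 0)"
  by (simp add: reps_def)

lemma sink_case:
  fixes d e1 e2 :: "'i::finite \<Rightarrow> nat"
  assumes sink: "\<And>j. 0 < d j \<Longrightarrow> r s j = 0"
    and e1: "e1 = (\<lambda>i. if i = s then d s else 0)" and e2: "e2 = (\<lambda>i. if i = s then 0 else d i)"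
  shows "hall_mult r (chi r e1 :: ('i,'k::{finite,field}) hall) (chi r e2) c X =
     (if c = d \<and> X \<in> reps r d then vq TYPE('k) powi euler r e2 e1 else 0)"
proof (cases "X \<in> reps r c")
  case False
  then show ?thesis by (auto simp: hall_mult_def)
next
  case Xc: True
  have de: "d = (\<lambda>i. e1 i + e2 i)" using e1 e2 by auto
  show ?thesis
  proof (cases "c = d")
    case False
    then show ?thesis using hm_chi[OF Xc, of e1 e2] de by simp
  next
    case True
    have X: "X \<in> reps r d" using Xc True by simp
    have Xs: "X s j m = (\<lambda>_ _. 0)" if "m < r s j" for j m
    proof -
      have "d j = 0" using sink that by (metis gr0I not_less_zero)
      then show ?thesis using reps_mats[OF X, of s j m] by (simp add: mats0)
    qed
    define U0 :: "'i \<Rightarrow> 'k vect set" where "U0 = (\<lambda>i. if i = s then vecs (d s) else {\<lambda>_. 0})"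
    have U0sub: "U0 \<in> subreps r d X"
      unfolding subreps_def
    proof (intro CollectI conjI allI impI)
      fix i show "subsp (d i) (U0 i)"
        by (auto simp: U0_def subsp_def vecs_def)
    next
      fix i j m x assume m: "m < r i j" and x: "x \<in> U0 i"
      show "mv (d i) (X i j m) x \<in> U0 j"
      proof (cases "j = s")
        case True then show ?thesis using mv_mats[OF reps_mats[OF X]] by (simp add: U0_def)
      next
        case False
        then show ?thesis using x Xs[of m j] m by (auto simp: U0_def split: if_splits)
      qed
    qed
    have uniq: "U = U0" if issub: "is_sub r d e1 X U Y" for U Y
    proof -
      obtain \<phi> where ph: "\<And>i. \<phi> i \<in> mats (d i) (e1 i) \<and> inj_on (mv (e1 i) (\<phi> i)) (vecs (e1 i))
          \<and> mv (e1 i) (\<phi> i) ` vecs (e1 i) = U i"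
        using issub unfolding is_sub_def by blast
      show ?thesis
      proof
        fix i show "U i = U0 i"
        proof (cases "i = s")
          case True
          then have "\<phi> s \<in> mats (d s) (d s)" "inj_on (mv (d s) (\<phi> s)) (vecs (d s))"
              "mv (d s) (\<phi> s) ` vecs (d s) = U s" using ph[of s] e1 by auto
          then show ?thesis using inj_full[of "\<phi> s" "d s"] True by (auto simp: U0_def)
        next
          case False
          then show ?thesis using ph[of i] e1 by (auto simp: U0_def vecs0 mv0)
        qed
      qed
    qed
    have subU0: "\<exists>Y\<in>reps r e1. is_sub r d e1 X U0 Y"
    proof (intro bexI[where x="\<lambda>_ _ _ _ _. 0"] zero_rep)
      show "is_sub r d e1 X U0 (\<lambda>_ _ _ _ _. 0)"
        unfolding is_sub_def
      proof (intro exI[where x="\<lambda>i. if i = s then idm (d s) else (\<lambda>_ _. 0)"] conjI allI impI)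
        fix i
        show "(if i = s then idm (d s) else (\<lambda>_ _. 0)) \<in> mats (d i) (e1 i)"
          using e1 by (auto simp: idm_mats)
        show "inj_on (mv (e1 i) (if i = s then idm (d s) else (\<lambda>_ _. 0))) (vecs (e1 i))"
          using e1 by (auto simp: inj_idm vecs0)
        show "mv (e1 i) (if i = s then idm (d s) else (\<lambda>_ _. 0)) ` vecs (e1 i) = U0 i"
          using e1 by (auto simp: img_idm vecs0 U0_def)
      next
        fix i j m assume m: "m < r i j"
        show "mm (e1 j) (if j = s then idm (d s) else (\<lambda>_ _. 0)) (\<lambda>_ _. 0) =
          mm (d i) (X i j m) (if i = s then idm (d s) else (\<lambda>_ _. 0))"
          using Xs[of m j] m by auto
      qed
    qed
    define Y2 :: "('i,'k) rep" where "Y2 = (\<lambda>i j m. if i = s \<or> j = s then (\<lambda>_ _. 0) else X i j m)"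
    have Y2: "Y2 \<in> reps r e2"
      unfolding reps_def Y2_def using reps_mats[OF X] reps_out[OF X] e2 by auto
    have quotU0: "is_quot r d e2 X U0 Y2"
      unfolding is_quot_def
    proof (intro exI[where x="\<lambda>i. if i = s then (\<lambda>_ _. 0) else idm (d i)"] conjI allI impI)
      fix i
      show "(if i = s then (\<lambda>_ _. 0) else idm (d i)) \<in> mats (e2 i) (d i)"
        using e2 by (auto simp: idm_mats)
      show "mv (d i) (if i = s then (\<lambda>_ _. 0) else idm (d i)) ` vecs (d i) = vecs (e2 i)"
        using e2 zero_img by (auto simp: img_idm vecs0)
      show "{x \<in> vecs (d i). mv (d i) (if i = s then (\<lambda>_ _. 0) else idm (d i)) x = (\<lambda>_. 0)} = U0 i"
        by (auto simp: U0_def mv_idm)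
    next
      fix i j m assume m: "m < r i j"
      show "mm (d j) (if j = s then (\<lambda>_ _. 0) else idm (d j)) (X i j m) =
          mm (e2 i) (Y2 i j m) (if i = s then (\<lambda>_ _. 0) else idm (d i))"
        using Xs[of m j] m e2 mm_idm_left[OF reps_mats[OF X]] mm_idm_right[OF reps_mats[OF X]]
        by (auto simp: Y2_def)
    qed
    have "(\<Sum>U\<in>subreps r d X.
       (if \<exists>Y\<in>reps r e1. is_sub r d e1 X U Y then 1 else 0) *
       (if \<exists>Y\<in>reps r e2. is_quot r d e2 X U Y then 1 else 0)) =
       (\<Sum>U\<in>subreps r d X. if U = U0 then (1::complex) else 0)"
      by (rule sum.cong) (use uniq subU0 quotU0 Y2 in auto)
    also have "\<dots> = 1" using U0sub by (simp add: sum.delta' finite_subreps)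
    finally show ?thesis using hm_chi[OF Xc, of e1 e2] de True X by simp
  qed
qed

definition Pm :: "nat \<Rightarrow> ('k::field) matr" where
  "Pm n = (\<lambda>p q. if p = 0 \<and> q = n then 1 else 0)"

lemma mvP: "mv (Suc n) (Pm n) x = (\<lambda>p. if p = 0 then x n else 0)"
proof
  fix p
  have "(\<Sum>q<Suc n. Pm n p q * x q) = (\<Sum>q<Suc n. if q = n then (if p = 0 then x q else 0) else 0)"
    by (rule sum.cong) (auto simp: Pm_def)
  then show "mv (Suc n) (Pm n) x p = (if p = 0 then x n else 0)" by (simp add: mv_def sum.delta')
qed

lemma Pm_mats: "Pm n \<in> mats 1 (Suc n)" by (auto simp: Pm_def mats_def)

lemma imgP: "mv (Suc n) (Pm n) ` vecs (Suc n) = (vecs 1 :: ('k::field) vect set)"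
proof
  show "mv (Suc n) (Pm n) ` vecs (Suc n) \<subseteq> (vecs 1 :: 'k vect set)"
    using mv_mats[OF Pm_mats] by blast
  show "(vecs 1 :: 'k vect set) \<subseteq> mv (Suc n) (Pm n) ` vecs (Suc n)"
  proof
    fix y :: "'k vect" assume y: "y \<in> vecs 1"
    show "y \<in> mv (Suc n) (Pm n) ` vecs (Suc n)"
    proof (rule image_eqI[where x="\<lambda>p. if p = n then y 0 else 0"])
      show "y = mv (Suc n) (Pm n) (\<lambda>p. if p = n then y 0 else 0)"
        using y by (auto simp: mvP vecs_def)
      show "(\<lambda>p. if p = n then y 0 else 0) \<in> vecs (Suc n)" by (auto simp: vecs_def)
    qed
  qed
qed

lemma kerP: "{x \<in> vecs (Suc n). mv (Suc n) (Pm n) x = (\<lambda>_. 0::'k::field)} = vecs n"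
  apply (auto simp: mvP vecs_def fun_eq_iff)
  by (metis le_antisym not_less_eq_eq)

lemma single_case:
  fixes s :: "'i::finite"
  assumes rss: "r s s = 0"
  shows "\<exists>K. K \<noteq> 0 \<and> (\<forall>c X. hall_mult r (chi r (\<lambda>i. if i = s then n else 0) :: ('i,'k::{finite,field}) hall)
     (chi r (simple_dim s)) c X = (if c = (\<lambda>i. if i = s then Suc n else 0) \<and> X \<in> reps r (\<lambda>i. if i = s then Suc n else 0) then K else 0))"
proof -
  define d :: "'i \<Rightarrow> nat" where "d = (\<lambda>i. if i = s then Suc n else 0)"
  define e1 :: "'i \<Rightarrow> nat" where "e1 = (\<lambda>i. if i = s then n else 0)"
  define e2 :: "'i \<Rightarrow> nat" where "e2 = simple_dim s"
  define Z :: "('i,'k) rep" where "Z = (\<lambda>_ _ _ _ _. 0)"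
  have de: "d = (\<lambda>i. e1 i + e2 i)" by (auto simp: d_def e1_def e2_def simple_dim_def)
  have Zonly: "X = Z" if X: "X \<in> reps r d" for X
  proof (intro ext)
    fix i j m p q
    show "X i j m p q = Z i j m p q"
    proof (cases "m < r i j")
      case False then show ?thesis using reps_out[OF X, of i j m] by (simp add: Z_def)
    next
      case True
      then have "d i = 0 \<or> d j = 0" using rss by (auto simp: d_def)
      then show ?thesis using reps_mats[OF X, of i j m] mats0 mats0' by (metis Z_def)
    qed
  qed
  have Zr: "Z \<in> reps r c" for c unfolding Z_def by (rule zero_rep)
  define K where "K = hall_mult r (chi r e1 :: ('i,'k) hall) (chi r e2) d Z"
  have main: "hall_mult r (chi r e1 :: ('i,'k) hall) (chi r e2) c X = (if c = d \<and> X \<in> reps r d then K else 0)" for c X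
  proof (cases "X \<in> reps r c")
    case False then show ?thesis by (auto simp: hall_mult_def)
  next
    case True
    show ?thesis
    proof (cases "c = d")
      case False then show ?thesis using hm_chi[OF True, of e1 e2] de by simp
    next
      case cd: True
      then show ?thesis using True Zonly K_def by simp
    qed
  qed
  define U1 :: "'i \<Rightarrow> 'k vect set" where "U1 = (\<lambda>i. if i = s then vecs n else {\<lambda>_. 0})"
  have U1sub: "U1 \<in> subreps r d Z"
    unfolding subreps_def
  proof (intro CollectI conjI allI impI)
    fix i show "subsp (d i) (U1 i)"
      by (auto simp: U1_def subsp_def vecs_def d_def)
  next
    fix i j m x assume "m < r i j" "x \<in> U1 i"
    show "mv (d i) (Z i j m) x \<in> U1 j" by (simp add: Z_def U1_def)
  qed
  have sub1: "is_sub r d e1 Z U1 Z"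
    unfolding is_sub_def
  proof (intro exI[where x="\<lambda>i. if i = s then idm n else (\<lambda>_ _. 0)"] conjI allI impI)
    fix i
    show "(if i = s then idm n else (\<lambda>_ _. 0)) \<in> mats (d i) (e1 i)"
      by (auto simp: idm_mats d_def e1_def)
    show "inj_on (mv (e1 i) (if i = s then idm n else (\<lambda>_ _. 0))) (vecs (e1 i))"
      by (auto simp: inj_idm vecs0 e1_def)
    show "mv (e1 i) (if i = s then idm n else (\<lambda>_ _. 0)) ` vecs (e1 i) = U1 i"
      by (auto simp: img_idm vecs0 U1_def e1_def)
  next
    fix i j m
    show "mm (e1 j) (if j = s then idm n else (\<lambda>_ _. 0)) (Z i j m) =
          mm (d i) (Z i j m) (if i = s then idm n else (\<lambda>_ _. 0))" by (simp add: Z_def)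
  qed
  have quot1: "is_quot r d e2 Z U1 Z"
    unfolding is_quot_def
  proof (intro exI[where x="\<lambda>i. if i = s then Pm n else (\<lambda>_ _. 0)"] conjI allI impI)
    fix i
    show "(if i = s then Pm n else (\<lambda>_ _. 0)) \<in> mats (e2 i) (d i)"
      using Pm_mats[of n] by (auto simp: d_def e2_def simple_dim_def)
    show "mv (d i) (if i = s then Pm n else (\<lambda>_ _. 0)) ` vecs (d i) = vecs (e2 i)"
      by (auto simp: imgP vecs0 d_def e2_def simple_dim_def)
    show "{x \<in> vecs (d i). mv (d i) (if i = s then Pm n else (\<lambda>_ _. 0)) x = (\<lambda>_. 0)} = U1 i"
      by (auto simp: kerP vecs0 d_def U1_def)
  next
    fix i j m
    show "mm (d j) (if j = s then Pm n else (\<lambda>_ _. 0)) (Z i j m) =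
          mm (e2 i) (Z i j m) (if i = s then Pm n else (\<lambda>_ _. 0))" by (simp add: Z_def)
  qed
  define g where "g = (\<lambda>U. (if \<exists>Y\<in>reps r e1. is_sub r d e1 Z U Y then 1 else 0) *
       (if \<exists>Y\<in>reps r e2. is_quot r d e2 Z U Y then 1 else (0::complex)))"
  have K: "K = vq TYPE('k) powi euler r e2 e1 * (\<Sum>U\<in>subreps r d Z. g U)"
    using hm_chi[OF Zr[of d], of e1 e2] de by (simp add: K_def g_def)
  have g1: "g U1 = 1" using sub1 quot1 Zr by (auto simp: g_def)
  have "Re (g U1) \<le> (\<Sum>U\<in>subreps r d Z. Re (g U))"
    by (rule member_le_sum) (auto simp: g_def U1sub finite_subreps)
  then have "Re (\<Sum>U\<in>subreps r d Z. g U) \<ge> 1" using g1 by (simp add: Re_sum)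
  then have "(\<Sum>U\<in>subreps r d Z. g U) \<noteq> 0" by (metis zero_complex.simps(1) not_one_le_zero)
  then have "K \<noteq> 0" using K vq_nz[where 'k='k] by simp
  then show ?thesis using main unfolding d_def e1_def e2_def by blast
qed

lemma single_in:
  fixes s :: "'i::finite"
  assumes rss: "r s s = 0"
  shows "(chi r (\<lambda>i. if i = s then n else 0) :: ('i,'k::{finite,field}) hall) \<in> comp_alg r"
proof (induction n)
  case 0
  then show ?case using comp_alg.unit[of r] by simp
next
  case (Suc n)
  obtain K where K: "K \<noteq> 0" and H: "\<And>c X. hall_mult r (chi r (\<lambda>i. if i = s then n else 0) :: ('i,'k) hall)
     (chi r (simple_dim s)) c X = (if c = (\<lambda>i. if i = s then Suc n else 0) \<and> X \<in> reps r (\<lambda>i. if i = s then Suc n else 0) then K else 0)"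
    using single_case[of r s n, OF rss] by blast
  show ?case by (rule step[OF H K Suc comp_alg.gen])
qed

theorem mainTheorem6:
  fixes r :: "'i::finite \<Rightarrow> 'i \<Rightarrow> nat" and d :: "'i \<Rightarrow> nat"
  assumes "acyclic {(i, j). 0 < r i j}"
  shows "(chi r d :: ('i, 'k::{finite,field}) hall) \<in> comp_alg r"
proof -
  define R where "R = {(i, j). 0 < r i j}"
  have wf: "wf (R\<inverse>)"
    using assms unfolding R_def by (intro finite_acyclic_wf_converse) auto
  show ?thesis
  proof (induction "card {i. 0 < d i}" arbitrary: d rule: less_induct)
    case less
    show ?case
    proof (cases "{i. 0 < d i} = {}")
      case True
      then have "d = (\<lambda>_. 0)" by auto
      then show ?thesis using comp_alg.unit[of r] by simp
    next
      case False
      then obtain x where x: "x \<in> {i. 0 < d i}" by blast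
      obtain s where s: "s \<in> {i. 0 < d i}" and smin: "\<And>y. (y, s) \<in> R\<inverse> \<Longrightarrow> y \<notin> {i. 0 < d i}"
        using wf x unfolding wf_eq_minimal by metis
      have sink: "r s j = 0" if "0 < d j" for j using smin[of j] that by (auto simp: R_def)
      define e1 where "e1 = (\<lambda>i. if i = s then d s else 0)"
      define e2 where "e2 = (\<lambda>i. if i = s then 0 else d i)"
      have c1: "(chi r e1 :: ('i,'k) hall) \<in> comp_alg r"
        unfolding e1_def by (rule single_in) (use sink s in auto)
      have "{i. 0 < e2 i} = {i. 0 < d i} - {s}" by (auto simp: e2_def)
      then have "card {i. 0 < e2 i} < card {i. 0 < d i}"
        using s by (metis card_Diff1_less finite)
      then have c2: "(chi r e2 :: ('i,'k) hall) \<in> comp_alg r" by (rule less)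
      show ?thesis
        using step[OF sink_case[of d r s e1 e2, OF sink e1_def e2_def] _ c1 c2] vq_nz[where 'k='k]
        by simp
    qed
  qed
qed

end
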